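(* Let $\mathcal{F}=\{z\in\Omega:|z|=|z|_i\ge1\}$. For $z\in\mathcal{F}\cap k_{\infty^2}$, one has $\overline{\lambda}(z)=v_n$ if and only if $n=\log_q|z|$.
   Context: $q$ odd prime power, $A=\mathbb{F}_q[T]$, $k_\infty=\mathbb{F}_q((T^{-1}))$, $|T|=q$, $k_{\infty^2}=\mathbb{F}_{q^2}((T^{-1}))$, $\Omega=\mathbb{C}_\infty\smallsetminus k_\infty$, $|z|_i=\min_{w\in k_\infty}|z-w|$, $\Gamma=\mathrm{PGL}_2(A)$. Fix $\boldsymbol{\mathrm i}\in\mathbb{F}_{q^2}$ with $\boldsymbol{\mathrm i}^2\in\mathbb{F}_q^\times\smallsetminus(\mathbb{F}_q^\times)^2$; every $z\in k_{\infty^2}\smallsetminus k_\infty$ is $g\cdot\boldsymbol{\mathrm i}$ for some $g\in\mathrm{GL}_2(k_\infty)$ acting by Möbius transformations. Let $\mathcal{T}$ be the Bruhat–Tits tree of $\mathrm{PGL}_2(k_\infty)$ (vertices: homothety classes of $\mathcal{O}_\infty$-lattices in $k_\infty^2$). The vertex set of $\Gamma\backslash\mathcal{T}$ is $\{v_0,v_1,\dots\}$, $v_n$ the $\Gamma$-orbit of the class of $T^n\mathcal{O}_\infty\oplus\mathcal{O}_\infty$. For such $z=g\cdot\boldsymbol{\mathrm i}$, $\overline{\lambda}(z)$ is the $\Gamma$-orbit of the vertex $g\cdot[\mathcal{O}_\infty\oplus\mathcal{O}_\infty]$ (well defined since the stabilizer of $\boldsymbol{\mathrm i}$ lies in $\mathrm{PGL}_2(\mathcal{O}_\infty)$).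 *)

theory Defs
  imports "HOL-Computational_Algebra.Formal_Laurent_Series"
begin

text \<open>The type 'b is the finite field F_{q^2} (CARD('b) = q^2).
  Laurent series 'b fls in the variable X = T^{-1} model k_{infinity^2} = F_{q^2}((1/T)).\<close>

definition Fq :: "nat \<Rightarrow> 'b::field set" where
  "Fq q = {x. x ^ q = x}"

definition kinf :: "nat \<Rightarrow> 'b::field fls set" where
  "kinf q = {f. \<forall>n. fls_nth f n \<in> Fq q}"

text \<open>A = F_q[T]: no positive powers of X = 1/T.\<close>
definition Apoly :: "nat \<Rightarrow> 'b::field fls set" where
  "Apoly q = {f \<in> kinf q. \<forall>n>0. fls_nth f n = 0}"

text \<open>O_infinity: no negative powers of X = 1/T.\<close>
definition Oinf :: "nat \<Rightarrow> 'b::field fls set" where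
  "Oinf q = {f \<in> kinf q. \<forall>n<0. fls_nth f n = 0}"

abbreviation TT :: "'b::field fls" where
  "TT \<equiv> fls_X_inv"

definition absv :: "nat \<Rightarrow> 'b::field fls \<Rightarrow> real" where
  "absv q z = (if z = 0 then 0 else real q powi (- fls_subdegree z))"

definition absi :: "nat \<Rightarrow> 'b::field fls \<Rightarrow> real" where
  "absi q z = Inf ((\<lambda>w. absv q (z - w)) ` kinf q)"

text \<open>2x2 matrices (a,b,c,d) = [[a,b],[c,d]] and vectors (x,y).\<close>
type_synonym 'f mat2 = "'f \<times> 'f \<times> 'f \<times> 'f"

fun det2 :: "('f::comm_ring) mat2 \<Rightarrow> 'f" where
  "det2 (a,b,c,d) = a*d - b*c"

definition GL2 :: "('f::comm_ring_1) set \<Rightarrow> 'f mat2 set" where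
  "GL2 R = {(a,b,c,d). a \<in> R \<and> b \<in> R \<and> c \<in> R \<and> d \<in> R \<and>
                (\<exists>e\<in>R. det2 (a,b,c,d) * e = 1)}"

fun mob :: "('f::field) mat2 \<Rightarrow> 'f \<Rightarrow> 'f" where
  "mob (a,b,c,d) z = (a*z + b) / (c*z + d)"

fun matvec :: "('f::comm_ring) mat2 \<Rightarrow> 'f \<times> 'f \<Rightarrow> 'f \<times> 'f" where
  "matvec (a,b,c,d) (x,y) = (a*x + b*y, c*x + d*y)"

definition lattice :: "nat \<Rightarrow> ('b::field fls \<times> 'b fls) set \<Rightarrow> bool" where
  "lattice q L \<longleftrightarrow> (\<exists>h\<in>GL2 (kinf q). L = matvec h ` (Oinf q \<times> Oinf q))"

text \<open>Homothety class of a lattice = vertex of the Bruhat-Tits tree.\<close>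
definition homcls :: "nat \<Rightarrow> ('b::field fls \<times> 'b fls) set \<Rightarrow> ('b fls \<times> 'b fls) set set" where
  "homcls q L = {(\<lambda>(x,y). (c*x, c*y)) ` L | c. c \<in> kinf q \<and> c \<noteq> 0}"

definition vact :: "('b::field) fls mat2 \<Rightarrow> ('b fls \<times> 'b fls) set set \<Rightarrow> ('b fls \<times> 'b fls) set set" where
  "vact g V = (\<lambda>L. matvec g ` L) ` V"

text \<open>Gamma-orbit of a vertex, Gamma = PGL2(A) (scalars act trivially on vertices,
  so GL2(A) has the same orbits).\<close>
definition orb :: "nat \<Rightarrow> ('b::field fls \<times> 'b fls) set set \<Rightarrow> ('b fls \<times> 'b fls) set set set" where
  "orb q V = {vact \<gamma> V | \<gamma>. \<gamma> \<in> GL2 (Apoly q)}"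

definition vtx :: "nat \<Rightarrow> nat \<Rightarrow> ('b::field fls \<times> 'b fls) set set set" where
  "vtx q n = orb q (homcls q ((\<lambda>(x,y). (TT ^ n * x, y)) ` (Oinf q \<times> Oinf q)))"

definition lambda_bar :: "nat \<Rightarrow> 'b::field \<Rightarrow> 'b fls \<Rightarrow> ('b fls \<times> 'b fls) set set set" where
  "lambda_bar q i z =
     (let g = (SOME g. g \<in> GL2 (kinf q) \<and> mob g (fls_const i) = z)
      in orb q (vact g (homcls q (Oinf q \<times> Oinf q))))"

end

theory Submission
  imports Defs "HOL-Algebra.Sylow" "HOL-Algebra.Multiplicative_Group"
begin
unbundle fps_syntax


lemma ff_pow_card:
  fixes x :: "'a :: {field,finite}"
  shows "x ^ card (UNIV :: 'a set) = x"
proof (cases "x = 0")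
  case False
  have "x * (\<Prod>y\<in>UNIV-{0}. x * y) = x * x ^ (card (UNIV :: 'a set) - 1) * \<Prod>(UNIV-{0})"
    by (simp add: prod.distrib mult_ac)
  also have "x * x ^ (card (UNIV :: 'a set) - 1) = x ^ Suc (card (UNIV :: 'a set) - 1)"
    by (subst power_Suc) auto
  also have "Suc (card (UNIV :: 'a set) - 1) = card (UNIV :: 'a set)"
    using finite_UNIV_card_ge_0[where ?'a = 'a] by simp
  also have "(\<Prod>y\<in>UNIV-{0}. x * y) = (\<Prod>y\<in>UNIV-{0}. y)"
    by (rule prod.reindex_bij_witness[of _ "\<lambda>y. y / x" "\<lambda>y. x * y"]) (use False in auto)
  finally show ?thesis
    by simp
qed (use finite_UNIV_card_ge_0[where ?'a = 'a] in auto)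

lemma ff_char_prime: "prime CHAR('a :: {field,finite})"
  using prime_CHAR_semidom finite_imp_CHAR_pos[of] by (metis finite_UNIV)

definition addG :: "'a::ab_group_add monoid" where
  "addG = \<lparr>carrier = UNIV, mult = (+), one = 0\<rparr>"

lemma addG_group: "group (addG :: 'a::ab_group_add monoid)"
  apply (rule groupI) apply (auto simp: addG_def add.assoc)
  by (metis add.left_inverse)

lemma addG_pow: "x [^]\<^bsub>(addG\<lparr>carrier := H\<rparr>)\<^esub> (n::nat) = (of_nat n * x :: 'a::ring_1)"
  by (induction n) (auto simp: addG_def distrib_right)

lemma ff_prime_dvd_card:
  assumes "prime r" "r dvd card (UNIV :: 'a :: {field,finite} set)"
  shows "r = CHAR('a)"
proof -
  obtain m where m: "card (UNIV :: 'a set) = r ^ 1 * m" using assms(2) by auto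
  have og: "order (addG :: 'a monoid) = r ^ 1 * m" using m by (simp add: order_def addG_def)
  obtain H where H: "subgroup H (addG :: 'a monoid)" "card H = r ^ 1"
    using sylow_thm[OF assms(1) addG_group og] by (auto simp: addG_def)
  have "card H \<ge> 2" using H(2) assms(1) prime_ge_2_nat by auto
  have "\<not> H \<subseteq> {0}"
  proof
    assume "H \<subseteq> {0}" hence "card H \<le> card {0::'a}" by (intro card_mono) auto
    thus False using \<open>card H \<ge> 2\<close> by simp
  qed
  then obtain x where x: "x \<in> H" "x \<noteq> 0" by auto
  interpret HG: group "addG\<lparr>carrier := H\<rparr>" by (rule subgroup.subgroup_is_group[OF H(1) addG_group])
  have "x [^]\<^bsub>(addG\<lparr>carrier := H\<rparr>)\<^esub> order (addG\<lparr>carrier := H\<rparr>) = \<one>\<^bsub>(addG\<lparr>carrier := H\<rparr>)\<^esub>"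
    by (rule HG.pow_order_eq_1) (use x in simp)
  hence "of_nat (order (addG\<lparr>carrier := H\<rparr>)) * x = (0::'a)" unfolding addG_pow by (simp add: addG_def)
  hence "of_nat r * x = 0" using H(2) by (simp add: order_def)
  hence "of_nat r = (0::'a)" using x by simp
  hence "CHAR('a) dvd r" by (simp add: of_nat_eq_0_iff_char_dvd)
  thus ?thesis using assms(1) ff_char_prime[where 'a='a]
    by (metis prime_nat_iff prime_gt_1_nat less_irrefl)
qed




lemma only_prime_power: assumes "(q::nat) \<noteq> 0" "prime p" "\<And>r. prime r \<Longrightarrow> r dvd q \<Longrightarrow> r = p" shows "\<exists>j. q = p ^ j"
proof -
  obtain y where y: "q = p ^ multiplicity p q * y" "\<not> p dvd y"
  proof (rule multiplicity_decompose'[of q p])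
    show "q \<noteq> 0" by (rule assms(1))
    show "\<not> is_unit p" using assms(2) by (simp add: prime_nat_iff)
  qed
  have "y = 1"
  proof (rule ccontr)
    assume "y \<noteq> 1"
    then obtain r where "prime r" "r dvd y" using prime_factor_nat by blast
    moreover hence "r dvd q" by (metis dvd_mult y(1))
    ultimately show False using assms(3) y(2) by blast
  qed
  thus ?thesis using y by auto
qed

locale setting =
  fixes q :: nat and i :: "'b::{field,finite}"
  assumes card: "card (UNIV :: 'b set) = q ^ 2" and oddq: "odd q"
    and i2: "i ^ 2 \<in> Fq q" and inz: "i ^ 2 \<noteq> 0" and ns: "\<forall>y\<in>Fq q. y ^ 2 \<noteq> i ^ 2"
begin

lemma card_ge2: "card (UNIV :: 'b set) \<ge> 2"
proof -
  have "card {0::'b, 1} \<le> card (UNIV :: 'b set)" by (rule card_mono) auto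
  thus ?thesis by simp
qed

lemma q_gt1: "q > 1"
proof (rule ccontr)
  assume "\<not> q > 1" hence "q \<le> 1" by simp
  hence "q = 0 \<or> q = 1" by auto
  thus False using card card_ge2 by auto
qed

lemma q_pos: "q > 0" using q_gt1 by simp

lemma q_charpow: "\<exists>j. q = CHAR('b) ^ j"
proof (rule only_prime_power)
  show "q \<noteq> 0" using q_pos by simp
  show "prime CHAR('b)" by (rule ff_char_prime)
  fix r assume "prime r" "r dvd q"
  hence "r dvd card (UNIV :: 'b set)" unfolding card by (simp add: power2_eq_square)
  thus "r = CHAR('b)" using ff_prime_dvd_card \<open>prime r\<close> by blast
qed

lemma frob_add: "(x + y :: 'b) ^ q = x ^ q + y ^ q"
  using q_charpow ff_char_prime[where 'a='b] freshmans_dream' by blast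

lemma frob_sum: "(sum f A :: 'b) ^ q = sum (\<lambda>j. f j ^ q) A"
  using q_charpow ff_char_prime[where 'a='b] freshmans_dream_sum' by blast

lemma frob_frob: "((x::'b) ^ q) ^ q = x"
  using ff_pow_card[of x] card by (simp add: power2_eq_square power_mult)

lemma frob_minus: "(- x :: 'b) ^ q = - (x ^ q)"
  using oddq by (simp add: power_minus_odd)

lemma frob_diff: "(x - y :: 'b) ^ q = x ^ q - y ^ q"
  using frob_add[of x "-y"] frob_minus by simp

lemma Fq_0: "(0::'b) \<in> Fq q" using q_pos by (simp add: Fq_def)
lemma Fq_1: "(1::'b) \<in> Fq q" by (simp add: Fq_def)
lemma Fq_add: "(a::'b) \<in> Fq q \<Longrightarrow> b \<in> Fq q \<Longrightarrow> a + b \<in> Fq q" by (simp add: Fq_def frob_add)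
lemma Fq_diff: "(a::'b) \<in> Fq q \<Longrightarrow> b \<in> Fq q \<Longrightarrow> a - b \<in> Fq q" by (simp add: Fq_def frob_diff)
lemma Fq_uminus: "(a::'b) \<in> Fq q \<Longrightarrow> - a \<in> Fq q" by (simp add: Fq_def frob_minus)
lemma Fq_mult: "(a::'b) \<in> Fq q \<Longrightarrow> b \<in> Fq q \<Longrightarrow> a * b \<in> Fq q" by (simp add: Fq_def power_mult_distrib)
lemma Fq_inverse: "(a::'b) \<in> Fq q \<Longrightarrow> inverse a \<in> Fq q" by (simp add: Fq_def power_inverse)
lemma Fq_divide: "(a::'b) \<in> Fq q \<Longrightarrow> b \<in> Fq q \<Longrightarrow> a / b \<in> Fq q" by (simp add: Fq_def power_divide)
lemma Fq_2: "(2::'b) \<in> Fq q" using Fq_add[OF Fq_1 Fq_1] by simp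

lemma i_notin: "i \<notin> Fq q" using ns by blast
lemma i_nz: "i \<noteq> 0" using inz by simp

lemma two_nz: "(2::'b) \<noteq> 0"
proof
  assume "(2::'b) = 0"
  hence "of_nat 2 = (0::'b)" by simp
  hence "CHAR('b) dvd 2" by (simp only: of_nat_eq_0_iff_char_dvd)
  hence "CHAR('b) = 2" using ff_char_prime[where 'a='b]
    by (metis prime_nat_iff prime_gt_1_nat less_irrefl two_is_prime_nat)
  then obtain j where "q = 2 ^ j" using q_charpow by auto
  moreover have "j \<noteq> 0" using q_gt1 calculation by (cases j) auto
  ultimately show False using oddq by auto
qed

lemma iq: "i ^ q = - i"
proof -
  have "(i ^ q) ^ 2 = (i ^ 2) ^ q" by (simp add: power_mult[symmetric] mult.commute)
  also have "\<dots> = i ^ 2" using i2 by (simp add: Fq_def)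
  finally have "(i ^ q - i) * (i ^ q + i) = 0" by (simp add: algebra_simps power2_eq_square)
  moreover have "i ^ q \<noteq> i" using i_notin by (simp add: Fq_def)
  ultimately show ?thesis by (simp add: eq_neg_iff_add_eq_0)
qed

lemma dec_a: "((x::'b) + x ^ q) / 2 \<in> Fq q"
  unfolding Fq_def using Fq_2 by (simp add: Fq_def power_divide frob_add frob_frob add.commute)

lemma dec_b: "((x::'b) - x ^ q) / (2 * i) \<in> Fq q"
  unfolding Fq_def using Fq_2 by (simp add: Fq_def power_divide frob_diff frob_frob power_mult_distrib iq minus_divide_left)

lemma dec_eq: "(x::'b) = (x + x ^ q) / 2 + (x - x ^ q) / (2 * i) * i"
proof -
  have e1: "(x - x ^ q) / (2 * i) * i = (x - x ^ q) / 2" using i_nz by simp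
  have "(x + x ^ q) / 2 + (x - x ^ q) / 2 = (2 * x) / 2"
    by (simp only: add_divide_distrib[symmetric]) simp
  also have "\<dots> = x" using two_nz by simp
  finally have e2: "(x + x ^ q) / 2 + (x - x ^ q) / 2 = x" .
  show "x = (x + x ^ q) / 2 + (x - x ^ q) / (2 * i) * i"
    by (simp only: e1 e2)
qed

lemma indep: "(a::'b) \<in> Fq q \<Longrightarrow> b \<in> Fq q \<Longrightarrow> a + b * i = 0 \<Longrightarrow> a = 0 \<and> b = 0"
proof -
  assume ab: "a \<in> Fq q" "b \<in> Fq q" "a + b * i = 0"
  show ?thesis
  proof (cases "b = 0")
    case True thus ?thesis using ab by simp
  next
    case False
    hence "i = - a / b" using ab(3) by (simp add: field_simps eq_neg_iff_add_eq_0)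
    hence "i \<in> Fq q" using ab Fq_divide Fq_uminus by simp
    thus ?thesis using i_notin by simp
  qed
qed

end



definition frobL :: "nat \<Rightarrow> 'a::comm_ring_1 fls \<Rightarrow> 'a fls" where
  "frobL q f = Abs_fls (\<lambda>n. (f $$ n) ^ q)"

lemma frobL_nth: "q > 0 \<Longrightarrow> frobL q f $$ n = (f $$ n) ^ q"
  unfolding frobL_def
  by (rule nth_Abs_fls, rule eventually_mono[OF MOST_fls_neg_nth_eq_0[of f]]) (simp add: power_0_left)

context setting
begin

lemma frobL_nth': "frobL q f $$ n = (f $$ n) ^ q" using frobL_nth q_pos by blast

lemma frobL_0: "frobL q (0::'b fls) = 0"
  by (rule fls_eqI) (simp add: frobL_nth' q_pos)

lemma frobL_eq0_iff: "frobL q (f::'b fls) = 0 \<longleftrightarrow> f = 0"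
  by (auto simp: fls_eq_iff frobL_nth' q_pos)

lemma frobL_subdeg: "fls_subdegree (frobL q (f::'b fls)) = fls_subdegree f"
proof (cases "f = 0")
  case True thus ?thesis by (simp add: frobL_0)
next
  case False
  show ?thesis
    by (rule fls_subdegree_eqI) (use False in \<open>simp_all add: frobL_nth' q_pos\<close>)
qed

lemma frobL_add: "frobL q (f + g :: 'b fls) = frobL q f + frobL q g"
  by (rule fls_eqI) (simp add: frobL_nth' frob_add)

lemma frobL_diff: "frobL q (f - g :: 'b fls) = frobL q f - frobL q g"
  by (rule fls_eqI) (simp add: frobL_nth' frob_diff)

lemma frobL_uminus: "frobL q (- f :: 'b fls) = - frobL q f"
  by (rule fls_eqI) (simp add: frobL_nth' frob_minus)

lemma frobL_one: "frobL q (1 :: 'b fls) = 1"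
  by (rule fls_eqI) (simp add: frobL_nth' q_pos)

lemma frobL_const: "frobL q (fls_const c :: 'b fls) = fls_const (c ^ q)"
  by (rule fls_eqI) (simp add: frobL_nth' q_pos)

lemma frobL_mult: "frobL q (f * g :: 'b fls) = frobL q f * frobL q g"
proof (rule fls_eqI)
  fix n
  have "frobL q (f * g) $$ n = ((f * g) $$ n) ^ q" by (simp add: frobL_nth')
  also have "\<dots> = (\<Sum>j=fls_subdegree f..n - fls_subdegree g. f $$ j * g $$ (n - j)) ^ q"
    by (simp add: fls_times_nth(2))
  also have "\<dots> = (\<Sum>j=fls_subdegree f..n - fls_subdegree g. (f $$ j) ^ q * (g $$ (n - j)) ^ q)"
    by (simp add: frob_sum power_mult_distrib)
  also have "\<dots> = (frobL q f * frobL q g) $$ n"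
    by (simp add: fls_times_nth(2) frobL_subdeg frobL_nth')
  finally show "frobL q (f * g) $$ n = (frobL q f * frobL q g) $$ n" .
qed

lemma frobL_inverse: "frobL q (inverse f :: 'b fls) = inverse (frobL q f)"
proof (cases "f = 0")
  case True thus ?thesis by (simp add: frobL_0)
next
  case False
  have "frobL q f * frobL q (inverse f) = 1"
    using False by (simp add: frobL_mult[symmetric] frobL_one)
  moreover have "frobL q f \<noteq> 0" using False frobL_eq0_iff by simp
  ultimately show ?thesis by (metis inverse_unique mult.commute)
qed

lemma frobL_divide: "frobL q (f / g :: 'b fls) = frobL q f / frobL q g"
  by (simp add: divide_inverse frobL_mult frobL_inverse)

lemma kinf_iff: "(f::'b fls) \<in> kinf q \<longleftrightarrow> frobL q f = f"
  by (auto simp: kinf_def Fq_def fls_eq_iff frobL_nth')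

lemma kinf_0: "(0::'b fls) \<in> kinf q" by (simp add: kinf_iff frobL_0)
lemma kinf_1: "(1::'b fls) \<in> kinf q" by (simp add: kinf_iff frobL_one)
lemma kinf_add: "(f::'b fls) \<in> kinf q \<Longrightarrow> g \<in> kinf q \<Longrightarrow> f + g \<in> kinf q" by (simp add: kinf_iff frobL_add)
lemma kinf_diff: "(f::'b fls) \<in> kinf q \<Longrightarrow> g \<in> kinf q \<Longrightarrow> f - g \<in> kinf q" by (simp add: kinf_iff frobL_diff)
lemma kinf_uminus: "(f::'b fls) \<in> kinf q \<Longrightarrow> - f \<in> kinf q" by (simp add: kinf_iff frobL_uminus)
lemma kinf_mult: "(f::'b fls) \<in> kinf q \<Longrightarrow> g \<in> kinf q \<Longrightarrow> f * g \<in> kinf q" by (simp add: kinf_iff frobL_mult)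
lemma kinf_inverse: "(f::'b fls) \<in> kinf q \<Longrightarrow> inverse f \<in> kinf q" by (simp add: kinf_iff frobL_inverse)
lemma kinf_divide: "(f::'b fls) \<in> kinf q \<Longrightarrow> g \<in> kinf q \<Longrightarrow> f / g \<in> kinf q" by (simp add: kinf_iff frobL_divide)
lemma kinf_const: "(c::'b) \<in> Fq q \<Longrightarrow> fls_const c \<in> kinf q" by (simp add: kinf_iff frobL_const Fq_def)
lemma kinf_shift: "(f::'b fls) \<in> kinf q \<Longrightarrow> fls_shift k f \<in> kinf q" by (simp add: kinf_def)
lemma kinf_X_inv: "(fls_X_inv::'b fls) \<in> kinf q" by (simp add: kinf_def Fq_def q_pos)
lemma kinf_power: "(f::'b fls) \<in> kinf q \<Longrightarrow> f ^ n \<in> kinf q" by (induction n) (simp_all add: kinf_1 kinf_mult)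

end



definition vge :: "'a::zero fls \<Rightarrow> int \<Rightarrow> bool" where
  "vge f k \<longleftrightarrow> (\<forall>n<k. f $$ n = 0)"

lemma vge_iff: "vge f k \<longleftrightarrow> f = 0 \<or> k \<le> fls_subdegree f"
proof
  assume a: "vge f k"
  show "f = 0 \<or> k \<le> fls_subdegree f"
  proof (cases "f = 0")
    case False
    hence "f $$ fls_subdegree f \<noteq> 0" by simp
    hence "k \<le> fls_subdegree f" using a unfolding vge_def using not_le by blast
    thus ?thesis by simp
  qed simp
next
  assume "f = 0 \<or> k \<le> fls_subdegree f"
  thus "vge f k" unfolding vge_def by auto
qed

lemma vge_0 [simp]: "vge 0 k" by (simp add: vge_def)
lemma vge_mono: "vge f k \<Longrightarrow> l \<le> k \<Longrightarrow> vge f l" by (simp add: vge_def)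
lemma vge_add: "vge f k \<Longrightarrow> vge g k \<Longrightarrow> vge (f + g) k" by (simp add: vge_def)
lemma vge_diff: "vge f k \<Longrightarrow> vge (g::'a::ab_group_add fls) k \<Longrightarrow> vge (f - g) k" by (simp add: vge_def)
lemma vge_uminus: "vge (- (f::'a::ab_group_add fls)) k = vge f k" by (simp add: vge_def)
lemma vge_mult: "vge (f::'a::idom fls) k \<Longrightarrow> vge g l \<Longrightarrow> vge (f * g) (k + l)"
  by (cases "f = 0"; cases "g = 0") (auto simp: vge_iff)
lemma vge_divide: "vge (f::'a::field fls) k \<Longrightarrow> g \<noteq> 0 \<Longrightarrow> vge (f / g) (k - fls_subdegree g)"
proof -
  assume a: "vge f k" "g \<noteq> 0"
  have "vge (inverse g) (- fls_subdegree g)" by (simp add: vge_iff)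
  from vge_mult[OF a(1) this] show ?thesis by (simp add: divide_inverse)
qed
lemma vge_shift: "vge (fls_shift m f) k \<longleftrightarrow> vge f (k + m)"
  unfolding vge_def
proof (simp, intro iffI allI impI)
  fix n assume a: "\<forall>n<k. f $$ (n + m) = 0" "n < k + m"
  have "n - m < k" using a(2) by simp
  hence "f $$ (n - m + m) = 0" using a(1) by blast
  thus "f $$ n = 0" by simp
qed simp
lemma vge_subdeg: "vge f (fls_subdegree f)" by (simp add: vge_iff)
lemma vge_const: "vge (fls_const c) 0" by (simp add: vge_def)

context setting
begin

definition II :: "'b fls" where "II = fls_const i"
definition JJ :: "'b fls" where "JJ = fls_const (i ^ 2)"

lemma II_sq: "II * II = JJ" by (simp add: power2_eq_square II_def JJ_def)
lemma kinf_JJ: "JJ \<in> kinf q" unfolding JJ_def using i2 by (rule kinf_const)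
lemma vge_JJ: "vge JJ 0" unfolding JJ_def by (rule vge_const)

lemma dec_fls: "\<exists>A B. A \<in> kinf q \<and> B \<in> kinf q \<and> z = A + B * II"
proof (intro exI conjI)
  let ?A = "(z + frobL q z) * fls_const (1/2)"
  let ?B = "(z - frobL q z) * fls_const (1/(2*i))"
  show "?A \<in> kinf q" unfolding kinf_def
    using dec_a by (auto simp: frobL_nth')
  show "?B \<in> kinf q" unfolding kinf_def
    using dec_b by (auto simp: frobL_nth')
  show "z = ?A + ?B * II"
  proof (rule fls_eqI)
    fix n show "z $$ n = (?A + ?B * II) $$ n"
      using dec_eq[of "z $$ n"] by (simp add: frobL_nth' II_def)
  qed
qed

lemma nth_PQ: "(P + Q * II) $$ n = P $$ n + Q $$ n * i" by (simp add: II_def)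

lemma indep_nth: "P \<in> kinf q \<Longrightarrow> Q \<in> kinf q \<Longrightarrow> (P + Q * II) $$ n = 0 \<Longrightarrow> P $$ n = 0 \<and> Q $$ n = 0"
  using indep[of "P $$ n" "Q $$ n"] by (auto simp: kinf_def nth_PQ simp del: fls_plus_nth)

lemma indep_fls: "P \<in> kinf q \<Longrightarrow> Q \<in> kinf q \<Longrightarrow> P + Q * II = 0 \<Longrightarrow> P = 0 \<and> Q = 0"
proof -
  assume a: "P \<in> kinf q" "Q \<in> kinf q" "P + Q * II = 0"
  have "P $$ n = 0 \<and> Q $$ n = 0" for n using indep_nth[OF a(1,2), of n] a(3) by simp
  thus ?thesis by (auto intro: fls_eqI)
qed

lemma vge_PQ: "P \<in> kinf q \<Longrightarrow> Q \<in> kinf q \<Longrightarrow> vge (P + Q * II) k \<longleftrightarrow> vge P k \<and> vge Q k"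
proof -
  assume kP: "P \<in> kinf q" and kQ: "Q \<in> kinf q"
  show ?thesis unfolding vge_def
  proof (intro iffI conjI allI impI)
    fix n assume h: "\<forall>n<k. (P + Q * II) $$ n = 0" "n < k"
    have "(P + Q * II) $$ n = 0" using h by blast
    from indep_nth[OF kP kQ this] show "P $$ n = 0" by blast
  next
    fix n assume h: "\<forall>n<k. (P + Q * II) $$ n = 0" "n < k"
    have "(P + Q * II) $$ n = 0" using h by blast
    from indep_nth[OF kP kQ this] show "Q $$ n = 0" by blast
  next
    fix n assume h: "(\<forall>n<k. P $$ n = 0) \<and> (\<forall>n<k. Q $$ n = 0)" "n < k"
    thus "(P + Q * II) $$ n = 0" by (simp only: nth_PQ) simp
  qed
qed

end



definition scl :: "'a::times \<Rightarrow> 'a \<times> 'a \<Rightarrow> 'a \<times> 'a" where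
  "scl c = (\<lambda>(x,y). (c*x, c*y))"

lemma homcls_scl: "homcls q L = {scl c ` L | c. c \<in> kinf q \<and> c \<noteq> 0}"
  by (simp add: homcls_def scl_def)

lemma TT_pow: "(TT::'a::field fls) ^ m * x = fls_shift (int m) x"
proof (induction m arbitrary: x)
  case 0 thus ?case by simp
next
  case (Suc m)
  have "TT ^ Suc m * x = TT * (TT ^ m * x)" by (simp add: mult.assoc)
  also have "\<dots> = fls_shift 1 (fls_shift (int m) x)" by (simp add: Suc fls_X_inv_times_conv_shift)
  finally show ?case by (simp add: add.commute)
qed

lemma vact_homcls: "vact g (homcls q L) = homcls q (matvec g ` L)"
proof -
  have *: "matvec g ` (scl c ` L) = scl c ` (matvec g ` L)" for c
  proof -
    obtain a b c' d where g: "g = (a,b,c',d)" by (cases g) auto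
    have "matvec g \<circ> scl c = scl c \<circ> matvec g"
      by (rule ext) (auto simp: g scl_def algebra_simps)
    thus ?thesis by (metis image_comp)
  qed
  show ?thesis unfolding vact_def homcls_scl using * by blast
qed


lemma matvec_id: "matvec (1,0,0,1) (v::'a::comm_ring_1 \<times> 'a) = v" by (cases v) simp

lemma vact_id: "vact (1,0,0,1) (V::('a::field fls \<times> 'a fls) set set) = V" by (simp add: vact_def matvec_id)

context setting
begin

lemma homcls_self: "(L :: ('b fls \<times> 'b fls) set) \<in> homcls q L"
proof -
  have "scl 1 ` L = L" by (auto simp: scl_def)
  thus ?thesis unfolding homcls_scl using kinf_1 by force
qed

lemma homcls_scale: assumes "(c::'b fls) \<in> kinf q" "c \<noteq> 0"
  shows "homcls q (scl c ` L) = homcls q L"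
proof -
  have comp: "scl c' ` (scl c ` L) = scl (c' * c) ` L" for c'
  proof -
    have "scl c' \<circ> scl c = scl (c' * c)" by (rule ext) (auto simp: scl_def mult.assoc)
    thus ?thesis by (metis image_comp)
  qed
  show ?thesis unfolding homcls_scl
  proof (intro equalityI subsetI)
    fix X assume "X \<in> {scl c' ` (scl c ` L) |c'. c' \<in> kinf q \<and> c' \<noteq> 0}"
    then obtain c' where "X = scl (c' * c) ` L" "c' \<in> kinf q" "c' \<noteq> 0" using comp by auto
    thus "X \<in> {scl c' ` L |c'. c' \<in> kinf q \<and> c' \<noteq> 0}" using assms kinf_mult by (auto intro!: exI[of _ "c' * c"])
  next
    fix X assume "X \<in> {scl c' ` L |c'. c' \<in> kinf q \<and> c' \<noteq> 0}"
    then obtain c'' where X: "X = scl c'' ` L" "c'' \<in> kinf q" "c'' \<noteq> 0" by auto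
    have "X = scl (c'' / c) ` (scl c ` L)" using comp X assms by simp
    thus "X \<in> {scl c' ` (scl c ` L) |c'. c' \<in> kinf q \<and> c' \<noteq> 0}"
      using X assms kinf_divide by (auto intro!: exI[of _ "c'' / c"])
  qed
qed

lemma Oinf_iff: "f \<in> Oinf q \<longleftrightarrow> f \<in> kinf q \<and> vge f 0"
  by (simp add: Oinf_def vge_def)

definition Sset :: "int \<Rightarrow> nat \<Rightarrow> ('b fls \<times> 'b fls) set" where
  "Sset mu m = {(u,w). u \<in> kinf q \<and> vge u (mu - int m) \<and> w \<in> kinf q \<and> vge w mu}"

lemma Lm_eq: "(\<lambda>(x,y). (TT ^ m * (x::'b fls), y)) ` (Oinf q \<times> Oinf q) = Sset 0 m"
proof (intro equalityI subsetI)
  fix v :: "'b fls \<times> 'b fls" assume "v \<in> (\<lambda>(x,y). (TT ^ m * x, y)) ` (Oinf q \<times> Oinf q)"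
  then obtain x y where "v = (fls_shift (int m) x, y)" "x \<in> Oinf q" "y \<in> Oinf q"
    by (auto simp: TT_pow)
  thus "v \<in> Sset 0 m" by (simp add: Sset_def Oinf_iff kinf_shift vge_shift)
next
  fix v assume "v \<in> Sset 0 m"
  then obtain u w where v: "v = (u,w)" "u \<in> kinf q" "vge u (- int m)" "w \<in> kinf q" "vge w 0"
    by (auto simp: Sset_def)
  have "v = (\<lambda>(x,y). (TT ^ m * x, y)) (fls_shift (- int m) u, w)" using v by (simp add: TT_pow)
  moreover have "(fls_shift (- int m) u, w) \<in> Oinf q \<times> Oinf q"
    using v by (simp add: Oinf_iff kinf_shift vge_shift)
  ultimately show "v \<in> (\<lambda>(x,y). (TT ^ m * x, y)) ` (Oinf q \<times> Oinf q)" by blast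
qed

lemma shift1_mult: "fls_shift k 1 * (f::'b fls) = fls_shift k f"
  by (simp add: fls_shifted_times_simps)

lemma Sset_scale: "scl (fls_shift (- mu) 1) ` Sset 0 m = Sset mu m"
proof (intro equalityI subsetI)
  fix v assume "v \<in> scl (fls_shift (- mu) 1) ` Sset 0 m"
  thus "v \<in> Sset mu m" by (auto simp: Sset_def scl_def shift1_mult kinf_shift vge_shift)
next
  fix v assume v: "v \<in> Sset mu m"
  then obtain u w where uw: "v = (u,w)" by (cases v) auto
  have "v = scl (fls_shift (- mu) 1) (fls_shift mu u, fls_shift mu w)"
    by (simp add: uw scl_def shift1_mult)
  moreover have "(fls_shift mu u, fls_shift mu w) \<in> Sset 0 m"
    using v uw by (simp add: Sset_def kinf_shift vge_shift)
  ultimately show "v \<in> scl (fls_shift (- mu) 1) ` Sset 0 m" by blast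
qed

lemma kinf_shift1: "fls_shift k (1::'b fls) \<in> kinf q" using kinf_shift kinf_1 by blast

lemma homcls_Sset: "homcls q (Sset mu m) = homcls q (Sset 0 m)"
  using homcls_scale[OF kinf_shift1, of "- mu" "Sset 0 m"] Sset_scale
  by (simp add: fls_shift_eq0_iff)

end



context setting
begin

lemma subdeg_eq_vge: "f \<noteq> 0 \<Longrightarrow> g \<noteq> 0 \<Longrightarrow> (\<And>k. vge f k \<longleftrightarrow> vge g k) \<Longrightarrow> fls_subdegree f = fls_subdegree (g::'b fls)"
  by (metis antisym vge_iff vge_subdeg)

lemma vge_mult_eq: "vge f k \<Longrightarrow> vge g l \<Longrightarrow> r = k + l \<Longrightarrow> vge (f * (g::'b fls)) r"
  using vge_mult by blast

lemma lattice_g: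
  assumes g: "g \<in> GL2 (kinf q)" and mob: "mob g II = A + B * II"
    and AB: "A \<in> kinf q" "B \<in> kinf q" "B \<noteq> 0" and vA: "vge A (fls_subdegree B)"
    and vB: "fls_subdegree B = - int m"
  shows "\<exists>mu. matvec g ` (Oinf q \<times> Oinf q) = Sset mu m"
proof -
  obtain al be ga de where gdef: "g = (al, be, ga, de)" by (cases g) auto
  from g obtain e where k: "al \<in> kinf q" "be \<in> kinf q" "ga \<in> kinf q" "de \<in> kinf q"
    and e: "(al * de - be * ga) * e = 1"
    by (auto simp: GL2_def gdef)
  have den: "ga * II + de \<noteq> 0"
  proof
    assume "ga * II + de = 0"
    hence "de + ga * II = 0" by (simp add: add.commute)
    hence "de = 0 \<and> ga = 0" using indep_fls k by blast
    thus False using e by simp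
  qed
  have "(al * II + be) / (ga * II + de) = A + B * II" using mob by (simp add: gdef)
  hence "al * II + be = (A + B * II) * (ga * II + de)" using den by (simp add: divide_eq_eq)
  also have "\<dots> = (A * de + B * ga * (II * II)) + (A * ga + B * de) * II"
    by (simp only: algebra_simps)
  also have "\<dots> = (A * de + B * ga * JJ) + (A * ga + B * de) * II"
    by (simp only: II_sq)
  finally have "(be - (A * de + B * ga * JJ)) + (al - (A * ga + B * de)) * II = 0"
    by (simp add: algebra_simps)
  moreover have "be - (A * de + B * ga * JJ) \<in> kinf q" "al - (A * ga + B * de) \<in> kinf q"
    using k AB kinf_JJ by (simp_all add: kinf_add kinf_diff kinf_mult)
  ultimately have "be - (A * de + B * ga * JJ) = 0 \<and> al - (A * ga + B * de) = 0"
    using indep_fls by blast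
  hence al: "al = A * ga + B * de" and be: "be = A * de + B * ga * JJ" by auto
  define d1 where "d1 = de + ga * II"
  define d2 where "d2 = de + (- ga) * II"
  define mu where "mu = fls_subdegree d1"
  have d1nz: "d1 \<noteq> 0" using den by (simp add: d1_def add.commute)
  have "vge (de + ga * II) mu" unfolding mu_def d1_def by (rule vge_subdeg)
  hence vgd0: "vge de mu \<and> vge ga mu" using vge_PQ[OF k(4) k(3)] by blast
  have vgd: "vge ga mu" "vge de mu" using vgd0 by auto
  have kmga: "- ga \<in> kinf q" using k(3) by (rule kinf_uminus)
  have d2nz: "d2 \<noteq> 0"
  proof
    assume "d2 = 0" hence "de + (- ga) * II = 0" by (simp only: d2_def)
    hence "de = 0 \<and> - ga = 0" by (rule indep_fls[OF k(4) kmga])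
    hence "d1 = 0" by (simp add: d1_def)
    thus False using d1nz by blast
  qed
  have vd2: "fls_subdegree d2 = mu" unfolding mu_def
  proof (rule subdeg_eq_vge[OF d2nz d1nz])
    fix kk
    have "vge d2 kk \<longleftrightarrow> vge de kk \<and> vge (- ga) kk" unfolding d2_def by (rule vge_PQ[OF k(4) kmga])
    also have "\<dots> \<longleftrightarrow> vge de kk \<and> vge ga kk" by (simp only: vge_uminus)
    also have "\<dots> \<longleftrightarrow> vge d1 kk" unfolding d1_def by (rule vge_PQ[OF k(4) k(3), symmetric])
    finally show "vge d2 kk \<longleftrightarrow> vge d1 kk" .
  qed
  define N where "N = de * de - ga * ga * JJ"
  have "d1 * d2 = de * de - ga * ga * (II * II)" by (simp add: d1_def d2_def algebra_simps)
  hence N12: "N = d1 * d2" by (simp only: N_def II_sq)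
  have Nnz: "N \<noteq> 0" using N12 d1nz d2nz by simp
  have vN: "fls_subdegree N = 2 * mu"
    using N12 d1nz d2nz vd2 by (simp add: mu_def)
  have kN: "N \<in> kinf q" using k kinf_JJ by (simp add: N_def kinf_diff kinf_mult)
  have vAm: "vge A (- int m)" using vA vB by simp
  have vBm: "vge B (- int m)" using vge_subdeg[of B] vB by simp
  have vJJ: "vge JJ 0" by (rule vge_JJ)
  show ?thesis
  proof (intro exI equalityI subsetI)
    fix v assume "v \<in> matvec g ` (Oinf q \<times> Oinf q)"
    then obtain x y where v: "v = matvec g (x,y)" and xy: "x \<in> kinf q" "vge x 0" "y \<in> kinf q" "vge y 0"
      by (auto simp: Oinf_iff)
    define w where "w = ga * x + de * y"
    have u: "al * x + be * y = A * w + B * (de * x + ga * JJ * y)"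
      by (simp add: al be w_def algebra_simps)
    have "vge (ga * x) mu" by (rule vge_mult_eq[OF vgd(1) xy(2)]) simp
    moreover have "vge (de * y) mu" by (rule vge_mult_eq[OF vgd(2) xy(4)]) simp
    ultimately have vw: "vge w mu" unfolding w_def by (rule vge_add)
    have "vge (de * x) mu" by (rule vge_mult_eq[OF vgd(2) xy(2)]) simp
    moreover have "vge (ga * JJ) mu" by (rule vge_mult_eq[OF vgd(1) vJJ]) simp
    hence "vge (ga * JJ * y) mu" by (rule vge_mult_eq[OF _ xy(4)]) simp
    ultimately have "vge (de * x + ga * JJ * y) mu" by (rule vge_add)
    hence "vge (B * (de * x + ga * JJ * y)) (mu - int m)" by (rule vge_mult_eq[OF vBm]) simp
    moreover have "vge (A * w) (mu - int m)" by (rule vge_mult_eq[OF vAm vw]) simp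
    ultimately have vu: "vge (al * x + be * y) (mu - int m)" unfolding u by (intro vge_add)
    have "al * x + be * y \<in> kinf q" "w \<in> kinf q"
      using k xy by (simp_all add: w_def kinf_add kinf_mult)
    thus "v \<in> Sset mu m"
      using v vw vu by (simp add: gdef Sset_def w_def)
  next
    fix v assume "v \<in> Sset mu m"
    then obtain u w where v: "v = (u,w)" and uw: "u \<in> kinf q" "vge u (mu - int m)" "w \<in> kinf q" "vge w mu"
      by (auto simp: Sset_def)
    define t1 where "t1 = (u - A * w) / B"
    define x where "x = (de * t1 - ga * JJ * w) / N"
    define y where "y = (de * w - ga * t1) / N"
    have "vge (A * w) (mu - int m)" by (rule vge_mult_eq[OF vAm uw(4)]) simp
    hence "vge (u - A * w) (mu - int m)" using uw(2) by (intro vge_diff)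
    hence "vge t1 (mu - int m - fls_subdegree B)" unfolding t1_def using AB(3) by (rule vge_divide)
    hence vt1: "vge t1 mu" using vB by simp
    have kt1: "t1 \<in> kinf q" using uw AB by (simp add: t1_def kinf_diff kinf_mult kinf_divide)
    have "vge (de * t1) (mu + mu)" by (rule vge_mult_eq[OF vgd(2) vt1]) simp
    moreover have "vge (ga * JJ) mu" by (rule vge_mult_eq[OF vgd(1) vJJ]) simp
    hence "vge (ga * JJ * w) (mu + mu)" by (rule vge_mult_eq[OF _ uw(4)]) simp
    ultimately have "vge (de * t1 - ga * JJ * w) (mu + mu)" by (rule vge_diff)
    hence "vge x (mu + mu - fls_subdegree N)" unfolding x_def using Nnz by (rule vge_divide)
    hence vx: "vge x 0" using vN by simp
    have "vge (de * w) (mu + mu)" by (rule vge_mult_eq[OF vgd(2) uw(4)]) simp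
    moreover have "vge (ga * t1) (mu + mu)" by (rule vge_mult_eq[OF vgd(1) vt1]) simp
    ultimately have "vge (de * w - ga * t1) (mu + mu)" by (rule vge_diff)
    hence "vge y (mu + mu - fls_subdegree N)" unfolding y_def using Nnz by (rule vge_divide)
    hence vy: "vge y 0" using vN by simp
    have kx: "x \<in> kinf q" "y \<in> kinf q" using k kt1 uw kN kinf_JJ
      by (simp_all add: x_def y_def kinf_diff kinf_mult kinf_divide)
    have hx: "N * x = de * t1 - ga * JJ * w" using Nnz by (simp add: x_def)
    have hy: "N * y = de * w - ga * t1" using Nnz by (simp add: y_def)
    have hB: "B * t1 = u - A * w" using AB by (simp add: t1_def)
    have "N * (ga * x + de * y) = ga * (N * x) + de * (N * y)" by (simp add: algebra_simps)
    also have "\<dots> = (de * de - ga * ga * JJ) * w" by (simp only: hx hy) (simp add: algebra_simps)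
    also have "\<dots> = N * w" by (simp only: N_def)
    finally have ew: "ga * x + de * y = w" using Nnz by simp
    have "N * (al * x + be * y) = (A * ga + B * de) * (N * x) + (A * de + B * ga * JJ) * (N * y)"
      by (simp add: al be algebra_simps)
    also have "\<dots> = A * ((de * de - ga * ga * JJ) * w) + (de * de - ga * ga * JJ) * (B * t1)"
      by (simp only: hx hy) (simp add: algebra_simps)
    also have "\<dots> = N * u" by (simp only: N_def[symmetric] hB) (simp add: algebra_simps)
    finally have eu: "al * x + be * y = u" using Nnz by simp
    have "v = matvec g (x, y)" using eu ew v by (simp add: gdef)
    moreover have "(x,y) \<in> Oinf q \<times> Oinf q" using kx vx vy by (simp add: Oinf_iff)
    ultimately show "v \<in> matvec g ` (Oinf q \<times> Oinf q)" by blast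
  qed
qed

end



context setting
begin

lemma Apoly_kinf: "(f::'b fls) \<in> Apoly q \<Longrightarrow> f \<in> kinf q" by (simp add: Apoly_def)

lemma Apoly_sub: "(f::'b fls) \<in> Apoly q \<Longrightarrow> f \<noteq> 0 \<Longrightarrow> fls_subdegree f \<le> 0"
proof -
  assume a: "f \<in> Apoly q" "f \<noteq> 0"
  have "f $$ fls_subdegree f \<noteq> 0" using a(2) by simp
  show ?thesis
  proof (rule ccontr)
    assume "\<not> fls_subdegree f \<le> 0"
    hence "f $$ fls_subdegree f = 0" using a(1) by (simp add: Apoly_def)
    thus False using a(2) by simp
  qed
qed

lemma vge_nz: "(f::'b fls) \<noteq> 0 \<Longrightarrow> vge f k \<longleftrightarrow> k \<le> fls_subdegree f" by (simp add: vge_iff)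

lemma vtx_eq: "vtx q n = orb q (homcls q (Sset 0 n))"
  unfolding vtx_def Lm_eq by (rule refl)

lemma Apoly_0: "(0::'b fls) \<in> Apoly q" using kinf_0 by (simp add: Apoly_def)
lemma Apoly_1: "(1::'b fls) \<in> Apoly q" using kinf_1 by (simp add: Apoly_def)
lemma id_GL2: "((1::'b fls),0,0,1) \<in> GL2 (Apoly q)"
  unfolding GL2_def using Apoly_0 Apoly_1 by auto

lemma Sset0_iff: "(u,w) \<in> Sset 0 k \<longleftrightarrow> u \<in> kinf q \<and> vge u (- int k) \<and> w \<in> kinf q \<and> vge w 0"
  by (simp add: Sset_def)

lemma TTn: "(TT ^ n :: 'b fls) \<in> kinf q" "vge (TT ^ n :: 'b fls) (- int n)" "TT ^ n \<noteq> (0::'b fls)" "fls_subdegree (TT ^ n :: 'b fls) = - int n"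
proof -
  have e: "TT ^ n = fls_shift (int n) (1::'b fls)" using TT_pow[of n 1] by simp
  show "(TT ^ n :: 'b fls) \<in> kinf q" unfolding e by (rule kinf_shift1)
  show "vge (TT ^ n :: 'b fls) (- int n)" unfolding e vge_shift by (simp add: vge_iff)
  show "TT ^ n \<noteq> (0::'b fls)" unfolding e fls_shift_eq0_iff by simp
  show "fls_subdegree (TT ^ n :: 'b fls) = - int n" unfolding e by simp
qed

lemma distinct:
  assumes "(vtx q n :: ('b fls \<times> 'b fls) set set set) = vtx q m"
  shows "n = m"
proof -
  have "homcls q (Sset 0 m) \<in> orb q (homcls q (Sset 0 m))"
    unfolding orb_def by (rule CollectI, rule exI[of _ "(1,0,0,1)"]) (simp only: vact_id id_GL2 simp_thms)
  hence "homcls q (Sset 0 m) \<in> orb q (homcls q (Sset 0 n))" using assms by (simp only: vtx_eq)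
  then obtain g where g: "g \<in> GL2 (Apoly q)" and hg0: "homcls q (Sset 0 m) = vact g (homcls q (Sset 0 n))"
    unfolding orb_def by blast
  have hg: "homcls q (Sset 0 m) = homcls q (matvec g ` Sset 0 n)" using hg0 by (simp only: vact_homcls)
  have "Sset 0 m \<in> homcls q (Sset 0 m)" by (rule homcls_self)
  hence "Sset 0 m \<in> homcls q (matvec g ` Sset 0 n)" by (simp only: hg)
  then obtain c where c: "c \<in> kinf q" "c \<noteq> 0" and L: "Sset 0 m = scl c ` (matvec g ` Sset 0 n)"
    unfolding homcls_scl by blast
  obtain a b c' d where gd: "g = (a,b,c',d)" by (cases g) auto
  have "a \<in> Apoly q \<and> b \<in> Apoly q \<and> c' \<in> Apoly q \<and> d \<in> Apoly q \<and> (\<exists>e\<in>Apoly q. (a * d - b * c') * e = 1)"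
    using g unfolding GL2_def gd by simp
  then obtain e where A: "a \<in> Apoly q" "b \<in> Apoly q" "c' \<in> Apoly q" "d \<in> Apoly q" "e \<in> Apoly q"
    and e: "(a * d - b * c') * e = 1"
    by blast
  define D where "D = a * d - b * c'"
  have De: "D * e = 1" using e by (simp only: D_def)
  have Dnz: "D \<noteq> 0" using De by (metis mult_zero_left zero_neq_one)
  have enz: "e \<noteq> 0" using De by (metis mult_zero_right zero_neq_one)
  have "fls_subdegree (D * e) = 0" by (simp only: De fls_one_subdegree)
  hence vDe: "fls_subdegree D + fls_subdegree e = 0" using Dnz enz by simp
  have ve: "fls_subdegree e \<le> 0" using Apoly_sub[OF A(5) enz] .
  have solve: "c * D * x = d * p1 - b * p2 \<and> c * D * y = a * p2 - c' * p1"
    if "p1 = c * (a * x + b * y)" "p2 = c * (c' * x + d * y)" for p1 p2 x y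
    using that by (simp add: D_def algebra_simps)
  have fwd: "scl c (matvec g p) \<in> Sset 0 m" if "p \<in> Sset 0 n" for p
    using that L by blast
  have bwd: "\<exists>x y. (x,y) \<in> Sset 0 n \<and> p = scl c (matvec g (x,y))" if "p \<in> Sset 0 m" for p
  proof -
    from that L obtain p' where "p' \<in> Sset 0 n" "p = scl c (matvec g p')" by blast
    thus ?thesis by (cases p') auto
  qed
  have "(TT ^ n, 0) \<in> Sset 0 n" using TTn kinf_0 by (simp add: Sset0_iff)
  from fwd[OF this] have P1: "vge (c * (a * TT ^ n)) (- int m)" "vge (c * (c' * TT ^ n)) 0"
    by (simp_all add: scl_def gd Sset0_iff)
  have "(0, 1) \<in> Sset 0 n" using kinf_0 kinf_1 by (simp add: Sset0_iff vge_iff)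
  from fwd[OF this] have P2: "vge (c * d) 0"
    by (simp_all add: scl_def gd Sset0_iff)
  have "(TT ^ m, 0) \<in> Sset 0 m" using TTn kinf_0 by (simp add: Sset0_iff)
  from bwd[OF this] obtain x3 y3 where xy3: "(x3,y3) \<in> Sset 0 n" "(TT ^ m, 0) = scl c (matvec g (x3,y3))"
    by blast
  have P3: "c * D * x3 = d * TT ^ m" "c * D * y3 = - (c' * TT ^ m)"
    using solve[of "TT ^ m" x3 y3 0] xy3(2) by (simp_all add: scl_def gd)
  have "(0, 1) \<in> Sset 0 m" using kinf_0 kinf_1 by (simp add: Sset0_iff vge_iff)
  from bwd[OF this] obtain x4 y4 where xy4: "(x4,y4) \<in> Sset 0 n" "(0, 1) = scl c (matvec g (x4,y4))"
    by blast
  have P4: "c * D * y4 = a"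
    using solve[of 0 x4 y4 1] xy4(2) by (simp_all add: scl_def gd)
  have vx3: "vge x3 (- int n)" "vge y3 0" using xy3(1) by (simp_all add: Sset0_iff)
  have vy4: "vge y4 0" using xy4(1) by (simp_all add: Sset0_iff)
  have "(a \<noteq> 0 \<and> d \<noteq> 0) \<or> (b \<noteq> 0 \<and> c' \<noteq> 0)" using Dnz D_def by auto
  thus ?thesis
  proof
    assume ad: "a \<noteq> 0 \<and> d \<noteq> 0"
    have va: "fls_subdegree a \<le> 0" and vd: "fls_subdegree d \<le> 0" using ad A Apoly_sub by auto
    have i1: "- int m \<le> fls_subdegree c + fls_subdegree a + (- int n)"
      using P1(1) ad c TTn[of n] by (simp add: vge_nz)
    have i2: "0 \<le> fls_subdegree c + fls_subdegree d" using P2 ad c by (simp add: vge_nz)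
    have x3nz: "x3 \<noteq> 0" using P3(1) ad TTn[of m] by auto
    have "fls_subdegree (c * D * x3) = fls_subdegree (d * TT ^ m)" using P3(1) by simp
    hence i3: "fls_subdegree c + fls_subdegree D + fls_subdegree x3 = fls_subdegree d - int m"
      using x3nz ad c Dnz TTn[of m] by simp
    have i3': "- int n \<le> fls_subdegree x3" using vx3(1) x3nz by (simp add: vge_nz)
    have y4nz: "y4 \<noteq> 0" using P4 ad by auto
    have "fls_subdegree (c * D * y4) = fls_subdegree a" using P4 by simp
    hence i4: "fls_subdegree c + fls_subdegree D + fls_subdegree y4 = fls_subdegree a"
      using y4nz c Dnz by simp
    have i4': "0 \<le> fls_subdegree y4" using vy4 y4nz by (simp add: vge_nz)
    show "n = m" using va vd i1 i2 i3 i3' i4 i4' vDe ve by linarith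
  next
    assume bc: "b \<noteq> 0 \<and> c' \<noteq> 0"
    have vc: "fls_subdegree c' \<le> 0" using bc A Apoly_sub by auto
    have i1: "0 \<le> fls_subdegree c + fls_subdegree c' + (- int n)"
      using P1(2) bc c TTn[of n] by (simp add: vge_nz)
    have y3nz: "y3 \<noteq> 0" using P3(2) bc TTn[of m] by auto
    have "fls_subdegree (c * D * y3) = fls_subdegree (- (c' * TT ^ m))" using P3(2) by simp
    hence i3: "fls_subdegree c + fls_subdegree D + fls_subdegree y3 = fls_subdegree c' - int m"
      using y3nz bc c Dnz TTn[of m] by simp
    have i3': "0 \<le> fls_subdegree y3" using vx3(2) y3nz by (simp add: vge_nz)
    show "n = m" using vc i1 i3 i3' vDe ve by linarith
  qed
qed

end



context setting
begin

lemma powi_less: "a < b \<Longrightarrow> real q powi a < real q powi b"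
  using power_int_strict_increasing[of a b "real q"] q_gt1 by simp

lemma II_nz: "II \<noteq> 0" using i_nz by (simp add: II_def)
lemma II_sub: "fls_subdegree II = 0" by (simp add: II_def)

lemma main_lb:
  assumes z: "z \<notin> kinf q" and eq: "absv q z = absi q z" and ge: "absi q z \<ge> 1"
  shows "\<exists>m. lambda_bar q i z = vtx q m \<and> absv q z = real q ^ m"
proof -
  obtain A B where AB: "A \<in> kinf q" "B \<in> kinf q" and zAB: "z = A + B * II" using dec_fls by blast
  have Bnz: "B \<noteq> 0" using z zAB AB by auto
  have znz: "z \<noteq> 0" using z kinf_0 by auto
  have zw: "z - w \<noteq> 0 \<and> fls_subdegree (z - w) \<le> fls_subdegree B" if w: "w \<in> kinf q" for w
  proof
    have e: "z - w = (A - w) + B * II" by (simp add: zAB algebra_simps)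
    have k: "A - w \<in> kinf q" using AB w by (simp add: kinf_diff)
    show nz: "z - w \<noteq> 0"
    proof
      assume "z - w = 0" hence "A - w = 0 \<and> B = 0" using indep_fls[OF k AB(2)] e by simp
      thus False using Bnz by simp
    qed
    have "vge (z - w) (fls_subdegree (z - w))" by (rule vge_subdeg)
    hence "vge B (fls_subdegree (z - w))" unfolding e using vge_PQ[OF k AB(2)] by blast
    thus "fls_subdegree (z - w) \<le> fls_subdegree B" using Bnz by (simp add: vge_nz)
  qed
  have absi: "absi q z = real q powi (- fls_subdegree B)"
    unfolding absi_def
  proof (rule cInf_eq_minimum)
    have "z - A = B * II" by (simp add: zAB)
    hence "absv q (z - A) = real q powi (- fls_subdegree B)"
      using Bnz II_nz II_sub by (simp add: absv_def)
    thus "real q powi (- fls_subdegree B) \<in> (\<lambda>w. absv q (z - w)) ` kinf q" using AB(1) by force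
  next
    fix x assume "x \<in> (\<lambda>w. absv q (z - w)) ` kinf q"
    then obtain w where w: "w \<in> kinf q" "x = absv q (z - w)" by blast
    have "x = real q powi (- fls_subdegree (z - w))" using zw[OF w(1)] w(2) by (simp add: absv_def)
    moreover have "- fls_subdegree B \<le> - fls_subdegree (z - w)" using zw[OF w(1)] by simp
    ultimately show "real q powi (- fls_subdegree B) \<le> x"
      using power_int_increasing[of "- fls_subdegree B" "- fls_subdegree (z - w)" "real q"] q_gt1 by simp
  qed
  have absv: "absv q z = real q powi (- fls_subdegree z)" using znz by (simp add: absv_def)
  have vzB: "fls_subdegree z \<le> fls_subdegree B" using zw[OF kinf_0] by simp
  have vz: "fls_subdegree z = fls_subdegree B"
  proof (rule ccontr)
    assume "fls_subdegree z \<noteq> fls_subdegree B"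
    hence "- fls_subdegree B < - fls_subdegree z" using vzB by simp
    hence "absi q z < absv q z" using absi absv powi_less by simp
    thus False using eq by simp
  qed
  have "vge z (fls_subdegree z)" by (rule vge_subdeg)
  hence vA: "vge A (fls_subdegree B)" unfolding zAB using vge_PQ[OF AB] vz zAB by simp
  have vBle: "fls_subdegree B \<le> 0"
  proof (rule ccontr)
    assume "\<not> fls_subdegree B \<le> 0"
    hence "- fls_subdegree B < 0" by simp
    hence "real q powi (- fls_subdegree B) < real q powi 0" by (rule powi_less)
    thus False using ge absi by simp
  qed
  define m where "m = nat (- fls_subdegree B)"
  have vB: "fls_subdegree B = - int m" using vBle by (simp add: m_def)
  define P where "P = (\<lambda>g. g \<in> GL2 (kinf q) \<and> mob g (fls_const i) = z)"
  have "P (B, A, 0, 1)"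
  proof -
    have "det2 (B, A, 0, 1) * inverse B = 1" using Bnz by simp
    hence "\<exists>e\<in>kinf q. det2 (B, A, 0, 1) * e = 1" using kinf_inverse[OF AB(2)] by blast
    hence "(B, A, 0, 1) \<in> GL2 (kinf q)"
      unfolding GL2_def using AB kinf_0 kinf_1 by simp
    moreover have "mob (B, A, 0, 1) II = A + B * II" by (simp add: add.commute)
    hence "mob (B, A, 0, 1) (fls_const i) = z" by (simp only: zAB II_def)
    ultimately show ?thesis by (simp add: P_def)
  qed
  define g where "g = (SOME g. P g)"
  have Pg: "P g" unfolding g_def by (rule someI, fact)
  hence gG: "g \<in> GL2 (kinf q)" and mg0: "mob g (fls_const i) = z" by (simp_all only: P_def)
  have mg: "mob g II = A + B * II" using mg0 by (simp only: II_def zAB)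
  obtain mu where mu: "matvec g ` (Oinf q \<times> Oinf q) = Sset mu m"
    using lattice_g[OF gG mg AB Bnz vA vB] by blast
  have "lambda_bar q i z = orb q (vact g (homcls q (Oinf q \<times> Oinf q)))"
    by (simp only: lambda_bar_def Let_def g_def P_def)
  also have "\<dots> = orb q (homcls q (Sset mu m))" by (simp only: vact_homcls mu)
  also have "\<dots> = vtx q m" by (simp only: homcls_Sset[of mu m] vtx_eq)
  finally have "lambda_bar q i z = vtx q m" .
  moreover have "absv q z = real q ^ m" using absv vz vB by (simp only: minus_minus power_int_of_nat)
  ultimately show ?thesis by blast
qed

end


theorem lemma4p2:
  fixes q :: nat and i :: "'b::{field,finite}" and z :: "'b fls" and n :: nat
  assumes "card (UNIV :: 'b set) = q ^ 2" and "odd q"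
    and "i ^ 2 \<in> Fq q" and "i ^ 2 \<noteq> 0" and "\<forall>y\<in>Fq q. y ^ 2 \<noteq> i ^ 2"
    and "z \<notin> kinf q"
    and "absv q z = absi q z" and "absi q z \<ge> 1"
  shows "lambda_bar q i z = vtx q n \<longleftrightarrow> real n = log (real q) (absv q z)"
proof -
  interpret setting q i using assms(1-5) by unfold_locales
  obtain m where lb: "lambda_bar q i z = vtx q m" and av: "absv q z = real q ^ m"
    using main_lb[OF assms(6-8)] by blast
  have "lambda_bar q i z = vtx q n \<longleftrightarrow> n = m"
  proof
    assume "lambda_bar q i z = vtx q n"
    hence "(vtx q n :: ('b fls \<times> 'b fls) set set set) = vtx q m" using lb by simp
    thus "n = m" by (rule distinct)
  qed (simp add: lb)
  also have "\<dots> \<longleftrightarrow> real n = log (real q) (absv q z)"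
  proof -
    have "log (real q) (absv q z) = real m" using av q_gt1 by simp
    thus ?thesis by simp
  qed
  finally show ?thesis .
qed

end
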